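(* Suppose $A$ is indecomposable. Let $K\subsetneq I$ be such that the subgroup $W_K=\langle r_i:i\in K\rangle$ of $W^v$ is infinite, and let $u\in\mathbb A$ satisfy $\alpha_i(u)=0$ for $i\in K$ and $\alpha_i(u)>0$ for $i\in I\setminus K$. Then there exists $w\in W^v$ such that the orbit $W_K\cdot w(u)$ is infinite (equivalently, the set of vectorial faces $W_K\cdot w\cdot F^v$ is infinite, where $F^v=\{v:\alpha_i(v)=0\ (i\in K),\ \alpha_i(v)>0\ (i\notin K)\}$ is the vectorial face containing $u$, whose fixer in $W^v$ is $W_K$).
   Context: $I$ finite, $A=(a_{i,j})_{i,j\in I}$ a generalized Cartan matrix ($a_{i,i}=2$, $a_{i,j}\in\mathbb Z_{\le0}$ for $i\ne j$, $a_{i,j}=0\iff a_{j,i}=0$); $A$ is indecomposable if the graph on $I$ with edges $\{i,j\}$ for $a_{i,j}\neq0$ is connected. $\mathbb A$ is a finite-dimensional real vector space with linearly independent families $(\alpha_i)_{i\in I}\subset\mathbb A^*$, $(\alpha_i^\vee)_{i\in I}\subset\mathbb A$ with $\alpha_j(\alpha_i^\vee)=a_{i,j}$; $r_i(v)=v-\alpha_i(v)\alpha_i^\vee$; $W^v=\langle r_i:i\in I\rangle$. *)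

theory Defs
  imports "HOL-Analysis.Analysis"
begin

definition gcm :: "('i \<Rightarrow> 'i \<Rightarrow> int) \<Rightarrow> bool" where
  "gcm a \<longleftrightarrow> (\<forall>i. a i i = 2) \<and> (\<forall>i j. i \<noteq> j \<longrightarrow> a i j \<le> 0)
     \<and> (\<forall>i j. a i j = 0 \<longleftrightarrow> a j i = 0)"

definition indecomposable :: "('i \<Rightarrow> 'i \<Rightarrow> int) \<Rightarrow> bool" where
  "indecomposable a \<longleftrightarrow> (\<forall>i j. (i, j) \<in> {(k, l). a k l \<noteq> 0}\<^sup>*)"

definition lin_indep_forms :: "('i::finite \<Rightarrow> 'v::real_vector \<Rightarrow> real) \<Rightarrow> bool" where
  "lin_indep_forms \<alpha> \<longleftrightarrow>
     (\<forall>c. (\<forall>v. (\<Sum>i\<in>UNIV. c i * \<alpha> i v) = 0) \<longrightarrow> (\<forall>i. c i = 0))"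

definition lin_indep_vecs :: "('i::finite \<Rightarrow> 'v::real_vector) \<Rightarrow> bool" where
  "lin_indep_vecs x \<longleftrightarrow> (\<forall>c. (\<Sum>i\<in>UNIV. c i *\<^sub>R x i) = 0 \<longrightarrow> (\<forall>i. c i = 0))"

definition refl :: "('i \<Rightarrow> 'v::real_vector \<Rightarrow> real) \<Rightarrow> ('i \<Rightarrow> 'v) \<Rightarrow> 'i \<Rightarrow> 'v \<Rightarrow> 'v" where
  "refl \<alpha> \<alpha>v i v = v - \<alpha> i v *\<^sub>R \<alpha>v i"

text \<open>Subgroup W_K of the linear automorphism group generated by the r_i, i in K.
  Since each r_i is an involution, the monoid generated by them under composition
  is the generated group.\<close>
inductive_set Wgen :: "('i \<Rightarrow> 'v::real_vector \<Rightarrow> real) \<Rightarrow> ('i \<Rightarrow> 'v) \<Rightarrow> 'i set \<Rightarrow> ('v \<Rightarrow> 'v) set"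
  for \<alpha> \<alpha>v K where
  Wgen_id: "id \<in> Wgen \<alpha> \<alpha>v K"
| Wgen_step: "i \<in> K \<Longrightarrow> w \<in> Wgen \<alpha> \<alpha>v K \<Longrightarrow> refl \<alpha> \<alpha>v i \<circ> w \<in> Wgen \<alpha> \<alpha>v K"

end

theory Submission
  imports Defs
begin

fun par :: "nat \<Rightarrow> bool" where
  "par 0 = False"
| "par (Suc n) = (\<not> par n)"

fun cfx :: "real \<Rightarrow> real \<Rightarrow> nat \<Rightarrow> real \<times> real" where
  "cfx x y 0 = (1, 0)"
| "cfx x y (Suc j) = (let (c, d) = cfx x y j in
     if par j then (y * d - c, d) else (c, x * c - d))"

fun gf :: "real \<Rightarrow> real \<Rightarrow> real \<Rightarrow> real \<Rightarrow> (nat \<Rightarrow> bool) \<Rightarrow> nat \<Rightarrow> real \<times> real" where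
  "gf x y P Q b 0 = (0, 0)"
| "gf x y P Q b (Suc j) = (let (c, d) = gf x y P Q b j in
     if b j then (d * y - c - P, d) else (c, c * x - d - Q))"

lemma cfx_inf:
  assumes "x \<ge> 0" "y \<ge> 0" "x * y \<ge> 4"
  shows "0 \<le> fst (cfx x y j) \<and> 0 \<le> snd (cfx x y j) \<and>
    (if par j then 2 * fst (cfx x y j) \<le> y * snd (cfx x y j) else 2 * snd (cfx x y j) \<le> x * fst (cfx x y j))"
proof (induction j)
  case 0 then show ?case using assms by simp
next
  case (Suc j)
  obtain c d where cd: "cfx x y j = (c, d)" by fastforce
  show ?case
  proof (cases "par j")
    case False
    with Suc cd have h: "0 \<le> c" "0 \<le> d" "2 * d \<le> x * c" by auto
    have "y * (2 * d) \<le> y * (x * c)" by (rule mult_left_mono[OF h(3) assms(2)])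
    moreover have "4 * c \<le> x * y * c" using assms(3) h(1) by (rule mult_right_mono)
    ultimately show ?thesis using False cd h by (simp add: algebra_simps)
  next
    case True
    with Suc cd have h: "0 \<le> c" "0 \<le> d" "2 * c \<le> y * d" by auto
    have "x * (2 * c) \<le> x * (y * d)" by (rule mult_left_mono[OF h(3) assms(1)])
    moreover have "4 * d \<le> x * y * d" using assms(3) h(2) by (rule mult_right_mono)
    ultimately show ?thesis using True cd h by (simp add: algebra_simps)
  qed
qed

locale KM =
  fixes a :: "'i::finite \<Rightarrow> 'i \<Rightarrow> int"
    and \<alpha> :: "'i \<Rightarrow> 'v::euclidean_space \<Rightarrow> real"
    and \<alpha>v :: "'i \<Rightarrow> 'v"
  assumes gcm: "gcm a"
    and lin: "\<And>i. linear (\<alpha> i)"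
    and indep: "lin_indep_vecs \<alpha>v"
    and pair: "\<And>i j. \<alpha> j (\<alpha>v i) = of_int (a i j)"
begin

abbreviation r where "r \<equiv> refl \<alpha> \<alpha>v"

lemma al_add: "\<alpha> i (x + y) = \<alpha> i x + \<alpha> i y" using lin real_vector.linear_add by blast
lemma al_diff: "\<alpha> i (x - y) = \<alpha> i x - \<alpha> i y" using lin real_vector.linear_diff by blast
lemma al_scale: "\<alpha> i (c *\<^sub>R x) = c * \<alpha> i x" using lin real_vector.linear_scale by fastforce
lemma al_sum: "\<alpha> i (sum g S) = (\<Sum>k\<in>S. \<alpha> i (g k))" using lin real_vector.linear_sum by blast

lemma a_ii: "a i i = 2" using gcm unfolding gcm_def by auto

lemma r_apply: "r i x = x - \<alpha> i x *\<^sub>R \<alpha>v i" by (simp add: refl_def)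

lemma r_r[simp]: "r i (r i x) = x"
  by (simp add: r_apply al_diff al_scale pair a_ii)

lemma r_comp_r[simp]: "r i \<circ> r i = id" by (rule ext) simp

lemma r_linear: "linear (r i)"
  by (rule linearI) (simp_all add: r_apply al_add al_scale algebra_simps)

primrec wd :: "'i list \<Rightarrow> 'v \<Rightarrow> 'v" where
  "wd [] = id"
| "wd (i # is) = r i \<circ> wd is"

lemma wd_append: "wd (xs @ ys) = wd xs \<circ> wd ys"
  by (induction xs) (auto simp: o_assoc)

lemma wd_linear: "linear (wd xs)"
  proof (induction xs)
  case Nil then show ?case by (simp add: id_def linear_ident)
next
  case (Cons i xs) then show ?case by (simp only: wd.simps) (rule linear_compose[OF _ r_linear])
qed

lemma wd_rev_inv: "wd (rev xs) (wd xs v) = v"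
  by (induction xs arbitrary: v) (auto simp: wd_append)

lemma wd_inv_rev: "wd xs (wd (rev xs) v) = v"
  using wd_rev_inv[of "rev xs"] by simp

lemma Wgen_eq: "Wgen \<alpha> \<alpha>v K = {wd ws | ws. set ws \<subseteq> K}"
proof (intro equalityI subsetI)
  fix f assume "f \<in> Wgen \<alpha> \<alpha>v K"
  then show "f \<in> {wd ws | ws. set ws \<subseteq> K}"
  proof induction
    case Wgen_id then show ?case by (auto intro!: exI[of _ "[]"])
  next
    case (Wgen_step i w)
    then obtain ws where "set ws \<subseteq> K" "w = wd ws" by auto
    with Wgen_step show ?case by (auto intro!: exI[of _ "i # ws"])
  qed
next
  fix f assume "f \<in> {wd ws | ws. set ws \<subseteq> K}"
  then obtain ws where ws: "set ws \<subseteq> K" "f = wd ws" by auto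
  have "wd ws \<in> Wgen \<alpha> \<alpha>v K" using ws(1)
    by (induction ws) (auto intro: Wgen.intros)
  with ws show "f \<in> Wgen \<alpha> \<alpha>v K" by simp
qed


definition lenS :: "'i set \<Rightarrow> ('v \<Rightarrow> 'v) \<Rightarrow> nat" where
  "lenS S f = (LEAST n. \<exists>ws. set ws \<subseteq> S \<and> length ws = n \<and> wd ws = f)"

abbreviation len where "len \<equiv> lenS UNIV"

lemma lenS_le: "set ws \<subseteq> S \<Longrightarrow> lenS S (wd ws) \<le> length ws"
  unfolding lenS_def by (rule Least_le) blast

lemma lenS_ex: assumes "set ws \<subseteq> S"
  shows "\<exists>ws'. set ws' \<subseteq> S \<and> length ws' = lenS S (wd ws) \<and> wd ws' = wd ws"
  unfolding lenS_def by (rule LeastI_ex) (use assms in blast)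

lemma len_ex: "\<exists>ws'. length ws' = len (wd ws) \<and> wd ws' = wd ws"
  using lenS_ex[of ws UNIV] by auto

lemma len_le: "len (wd ws) \<le> length ws"
  using lenS_le[of ws UNIV] by auto

lemma subadd:
  assumes "set ys \<subseteq> S"
  shows "len (wd xs \<circ> wd ys) \<le> len (wd xs) + lenS S (wd ys)"
proof -
  obtain xs' where xs': "length xs' = len (wd xs)" "wd xs' = wd xs" using len_ex by blast
  obtain ys' where ys': "set ys' \<subseteq> S" "length ys' = lenS S (wd ys)" "wd ys' = wd ys"
    using lenS_ex[OF assms] by blast
  have "len (wd xs \<circ> wd ys) = len (wd (xs' @ ys'))" by (simp add: wd_append xs' ys')
  also have "\<dots> \<le> length (xs' @ ys')" by (rule len_le)
  finally show ?thesis using xs' ys' by simp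
qed

definition pos :: "'v \<Rightarrow> bool" where
  "pos x \<longleftrightarrow> (\<exists>c. (\<forall>k. 0 \<le> c k) \<and> x = (\<Sum>k\<in>UNIV. c k *\<^sub>R \<alpha>v k))"

lemma pos_av: "pos (\<alpha>v i)"
  unfolding pos_def
proof (rule exI[of _ "\<lambda>k. if k = i then 1 else 0"], intro conjI)
  have "(\<lambda>k. (if k = i then 1 else 0) *\<^sub>R \<alpha>v k) = (\<lambda>k. if k = i then \<alpha>v i else 0)" by auto
  then show "\<alpha>v i = (\<Sum>k\<in>UNIV. (if k = i then 1 else 0) *\<^sub>R \<alpha>v k)"
    by (simp only:) (simp add: sum.delta)
qed simp

lemma pos_comb:
  assumes "pos x" "pos y" "0 \<le> c" "0 \<le> d"
  shows "pos (c *\<^sub>R x + d *\<^sub>R y)"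
proof -
  from assms obtain f g where f: "\<forall>k. 0 \<le> f k" "x = (\<Sum>k\<in>UNIV. f k *\<^sub>R \<alpha>v k)"
    and g: "\<forall>k. 0 \<le> g k" "y = (\<Sum>k\<in>UNIV. g k *\<^sub>R \<alpha>v k)" unfolding pos_def by blast
  show ?thesis unfolding pos_def
    apply (rule exI[of _ "\<lambda>k. c * f k + d * g k"])
    using f g assms(3,4)
    by (simp add: scaleR_sum_right sum.distrib scaleR_add_left)
qed

lemma wd_snoc: "wd (xs @ [i]) = wd xs \<circ> r i"
  by (simp add: wd_append)

lemma rs_gen: "r s (v + c *\<^sub>R \<alpha>v s + d *\<^sub>R \<alpha>v s') =
   v + (d * (- of_int (a s' s)) - c - \<alpha> s v) *\<^sub>R \<alpha>v s + d *\<^sub>R \<alpha>v s'"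
proof -
  have al: "\<alpha> s (v + c *\<^sub>R \<alpha>v s + d *\<^sub>R \<alpha>v s') = \<alpha> s v + 2 * c + d * of_int (a s' s)"
    by (simp add: al_add al_scale pair a_ii)
  show ?thesis unfolding r_apply al by (simp add: algebra_simps) (metis mult_2_right scaleR_add_left)
qed

lemma rs'_gen: "r s' (v + c *\<^sub>R \<alpha>v s + d *\<^sub>R \<alpha>v s') =
   v + c *\<^sub>R \<alpha>v s + (c * (- of_int (a s s')) - d - \<alpha> s' v) *\<^sub>R \<alpha>v s'"
proof -
  have al: "\<alpha> s' (v + c *\<^sub>R \<alpha>v s + d *\<^sub>R \<alpha>v s') = \<alpha> s' v + c * of_int (a s s') + 2 * d"
    by (simp add: al_add al_scale pair a_ii)
  show ?thesis unfolding r_apply al by (simp add: algebra_simps) (metis mult_2_right scaleR_add_left)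
qed

lemma wd_gf:
  "wd (rev (map (\<lambda>j. if b j then s else s') [0..<n])) v =
     v + fst (gf (- of_int (a s s')) (- of_int (a s' s)) (\<alpha> s v) (\<alpha> s' v) b n) *\<^sub>R \<alpha>v s
       + snd (gf (- of_int (a s s')) (- of_int (a s' s)) (\<alpha> s v) (\<alpha> s' v) b n) *\<^sub>R \<alpha>v s'"
proof (induction n)
  case 0 then show ?case by simp
next
  case (Suc n)
  obtain c d where cd: "gf (- of_int (a s s')) (- of_int (a s' s)) (\<alpha> s v) (\<alpha> s' v) b n = (c, d)"
    by fastforce
  have e: "wd (rev (map (\<lambda>j. if b j then s else s') [0..<Suc n])) v =
      r (if b n then s else s') (v + c *\<^sub>R \<alpha>v s + d *\<^sub>R \<alpha>v s')"
    using Suc cd by simp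
  show ?case
  proof (cases "b n")
    case True then show ?thesis unfolding e using cd by (simp add: rs_gen)
  next
    case False then show ?thesis unfolding e using cd by (simp add: rs'_gen)
  qed
qed

lemma wd_cfx:
  "wd (rev (map (\<lambda>j. if par j then s else s') [0..<n])) (\<alpha>v s) =
     fst (cfx (- of_int (a s s')) (- of_int (a s' s)) n) *\<^sub>R \<alpha>v s
       + snd (cfx (- of_int (a s s')) (- of_int (a s' s)) n) *\<^sub>R \<alpha>v s'"
proof (induction n)
  case 0 then show ?case by simp
next
  case (Suc n)
  obtain c d where cd: "cfx (- of_int (a s s')) (- of_int (a s' s)) n = (c, d)"
    by fastforce
  have e: "wd (rev (map (\<lambda>j. if par j then s else s') [0..<Suc n])) (\<alpha>v s) =
      r (if par n then s else s') (0 + c *\<^sub>R \<alpha>v s + d *\<^sub>R \<alpha>v s')"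
    using Suc cd by simp
  show ?case
  proof (cases "par n")
    case True then show ?thesis unfolding e using cd by (simp only: True if_True rs_gen) (simp add: True al_scale[of _ 0, simplified])
  next
    case False then show ?thesis unfolding e using cd by (simp only: False if_False rs'_gen) (simp add: False al_scale[of _ 0, simplified])
  qed
qed

lemma dihedral_fin:
  assumes ne: "s \<noteq> s'"
    and p: "p = rev (map (\<lambda>j. if par j then s else s') [0..<k])"
    and kl: "k \<le> lenS {s,s'} (wd p \<circ> r s)"
    and m1: "1 \<le> m"
    and braid: "\<And>v. gf (- of_int (a s s')) (- of_int (a s' s)) (\<alpha> s v) (\<alpha> s' v) par m
       = gf (- of_int (a s s')) (- of_int (a s' s)) (\<alpha> s v) (\<alpha> s' v) (Not \<circ> par) m"
    and nn: "\<forall>j<m. 0 \<le> fst (cfx (- of_int (a s s')) (- of_int (a s' s)) j)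
       \<and> 0 \<le> snd (cfx (- of_int (a s s')) (- of_int (a s' s)) j)"
  shows "\<exists>c d. 0 \<le> c \<and> 0 \<le> d \<and> wd p (\<alpha>v s) = c *\<^sub>R \<alpha>v s + d *\<^sub>R \<alpha>v s'"
proof (cases "k < m")
  case True
  then show ?thesis using nn wd_cfx[of s s' k] p by blast
next
  case False
  define t where "t = (\<lambda>j::nat. if par j then s else s')"
  define t' where "t' = (\<lambda>j::nat. if (Not \<circ> par) j then s else s')"
  have br: "wd (rev (map t [0..<m])) = wd (rev (map t' [0..<m]))"
    unfolding t_def t'_def by (rule ext) (simp only: wd_gf braid)
  have "[0..<k] = [0..<m] @ [m..<k]"
    using upt_add_eq_append[of 0 m "k - m"] False by simp
  then have p2: "p = rev (map t [m..<k]) @ rev (map t [0..<m])" using p t_def by simp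
  have "[0..<m] = 0 # [Suc 0..<m]" using m1 by (simp add: upt_conv_Cons)
  then have t2: "rev (map t' [0..<m]) = rev (map t' [Suc 0..<m]) @ [s]" by (simp add: t'_def)
  define q where "q = rev (map t [m..<k]) @ rev (map t' [Suc 0..<m])"
  have "wd p \<circ> r s = wd q"
    unfolding p2 wd_append br t2 q_def by (simp add: wd_append fun_eq_iff)
  moreover have "set q \<subseteq> {s, s'}" unfolding q_def t_def t'_def by auto
  moreover have "length q = k - 1" unfolding q_def using False m1 by simp
  ultimately have "lenS {s,s'} (wd p \<circ> r s) \<le> k - 1" using lenS_le by metis
  with kl False m1 show ?thesis by simp
qed

lemma alternating:
  assumes ne: "s \<noteq> s'" and sp: "set p \<subseteq> {s,s'}"
    and red: "length p = lenS {s,s'} (wd p)"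
    and kl: "length p \<le> lenS {s,s'} (wd p \<circ> r s)"
  shows "p = rev (map (\<lambda>j. if par j then s else s') [0..<length p])"
proof -
  define q where "q = rev p"
  define t where "t = (\<lambda>j::nat. if par j then s else s')"
  have qI: "q ! j \<in> {s, s'}" if "j < length q" for j
    using sp that unfolding q_def by (metis nth_mem set_rev subsetD)
  have adj: "q ! j \<noteq> q ! Suc j" if j: "Suc j < length q" for j
  proof
    assume eq: "q ! j = q ! Suc j"
    have qe: "q = take j q @ q ! j # q ! Suc j # drop (Suc (Suc j)) q"
      using j by (simp add: Cons_nth_drop_Suc)
    have "p = rev q" unfolding q_def by simp
    also have "\<dots> = rev (take j q @ q ! j # q ! Suc j # drop (Suc (Suc j)) q)"
      by (subst qe) (rule refl)
    also have "\<dots> = rev (drop (Suc (Suc j)) q) @ [q ! Suc j, q ! j] @ rev (take j q)" by simp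
    finally have "p = rev (drop (Suc (Suc j)) q) @ [q ! Suc j, q ! j] @ rev (take j q)" .
    then have "wd p = wd (rev (drop (Suc (Suc j)) q) @ rev (take j q))"
      using eq by (simp add: wd_append fun_eq_iff)
    moreover have "set (rev (drop (Suc (Suc j)) q) @ rev (take j q)) \<subseteq> {s, s'}"
      using sp unfolding q_def
      by (metis Un_subset_iff set_append set_rev set_drop_subset set_take_subset subset_trans)
    ultimately have "lenS {s,s'} (wd p) \<le> length (rev (drop (Suc (Suc j)) q) @ rev (take j q))"
      using lenS_le by metis
    also have "\<dots> < length p" using j unfolding q_def by simp
    finally show False using red by simp
  qed
  have q0: "q ! 0 \<noteq> s" if "0 < length q"
  proof
    assume e: "q ! 0 = s"
    have "p = butlast p @ [last p]" using that unfolding q_def by simp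
    moreover have "last p = s" using e that unfolding q_def by (simp add: last_conv_nth rev_nth)
    ultimately have "wd p \<circ> r s = wd (butlast p)" by (metis wd_snoc comp_assoc r_comp_r comp_id)
    moreover have "set (butlast p) \<subseteq> {s,s'}" using sp by (meson in_set_butlastD subset_iff)
    ultimately have "lenS {s,s'} (wd p \<circ> r s) \<le> length (butlast p)" using lenS_le by metis
    moreover have "0 < length p" using that unfolding q_def by simp
    ultimately show False using kl by (simp only: length_butlast)
  qed
  have "q ! j = t j" if "j < length q" for j
    using that
  proof (induction j)
    case 0 then show ?case using q0 qI[of 0] unfolding t_def by auto
  next
    case (Suc j)
    then have "q ! j = t j" by simp
    moreover have "q ! j \<noteq> q ! Suc j" using adj[of j] Suc.prems by blast
    moreover have "q ! j \<in> {s, s'}" "q ! Suc j \<in> {s, s'}" using qI[of j] qI[of "Suc j"] Suc.prems by auto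
    ultimately show ?case unfolding t_def using ne by auto
  qed
  then have qm: "q = map t [0..<length q]" by (intro nth_equalityI) auto
  have "p = rev q" unfolding q_def by simp
  also have "\<dots> = rev (map t [0..<length q])" by (subst qm) (rule refl)
  also have "length q = length p" unfolding q_def by simp
  finally show ?thesis unfolding t_def .
qed

lemma dihedral:
  assumes ne: "s \<noteq> s'" and sp: "set p \<subseteq> {s,s'}" and red: "length p = lenS {s,s'} (wd p)"
    and kl: "length p \<le> lenS {s,s'} (wd p \<circ> r s)"
  shows "\<exists>c d. 0 \<le> c \<and> 0 \<le> d \<and> wd p (\<alpha>v s) = c *\<^sub>R \<alpha>v s + d *\<^sub>R \<alpha>v s'"
proof -
  define k where "k = length p"
  have p: "p = rev (map (\<lambda>j. if par j then s else s') [0..<k])"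
    unfolding k_def by (rule alternating[OF ne sp red kl])
  have kl': "k \<le> lenS {s,s'} (wd p \<circ> r s)" using kl k_def by simp
  define X where "X = - a s s'"
  define Y where "Y = - a s' s"
  have X0: "0 \<le> X" and Y0: "0 \<le> Y" using gcm ne unfolding gcm_def X_def Y_def by auto
  have hz: "X = 0 \<longleftrightarrow> Y = 0" using gcm unfolding gcm_def X_def Y_def by auto
  have fin_or: "4 \<le> X * Y \<or> (X \<in> {0,1,2,3} \<and> Y \<in> {0,1,2,3})"
  proof (cases "4 \<le> X * Y")
    case False
    have "X \<le> 3"
    proof (rule ccontr)
      assume "\<not> X \<le> 3"
      then have "1 \<le> Y" using hz Y0 by auto
      then have "X * 1 \<le> X * Y" using X0 by (rule mult_left_mono)
      then have "X \<le> X * Y" by simp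
      then show False using False \<open>\<not> X \<le> 3\<close> by linarith
    qed
    moreover have "Y \<le> 3"
    proof (rule ccontr)
      assume "\<not> Y \<le> 3"
      then have "1 \<le> X" using hz X0 by auto
      then have "1 * Y \<le> X * Y" using Y0 by (rule mult_right_mono)
      then have "Y \<le> X * Y" by simp
      then show False using False \<open>\<not> Y \<le> 3\<close> by linarith
    qed
    ultimately show ?thesis using X0 Y0 by auto
  qed simp
  have xs: "- real_of_int (a s s') = of_int X" and ys: "- real_of_int (a s' s) = of_int Y"
    unfolding X_def Y_def by simp_all
  consider (inf) "4 \<le> X * Y" | (c00) "X = 0" "Y = 0" | (c11) "X = 1" "Y = 1"
    | (c12) "X = 1" "Y = 2" | (c21) "X = 2" "Y = 1" | (c13) "X = 1" "Y = 3" | (c31) "X = 3" "Y = 1"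
    using fin_or hz by auto
  then show ?thesis
  proof cases
    case inf
    have "4 \<le> real_of_int X * real_of_int Y"
      using inf by (metis of_int_le_iff of_int_mult of_int_numeral)
    from cfx_inf[OF _ _ this, of k] X0 Y0
    have "0 \<le> fst (cfx (of_int X) (of_int Y) k) \<and> 0 \<le> snd (cfx (of_int X) (of_int Y) k)" by simp
    then show ?thesis using wd_cfx[of s s' k] p unfolding xs ys by blast
  next
    case c00
    show ?thesis
      by (rule dihedral_fin[OF ne p kl', of 2]) (simp_all add: xs ys c00 eval_nat_numeral Let_def algebra_simps less_Suc_eq)
  next
    case c11
    show ?thesis
      by (rule dihedral_fin[OF ne p kl', of 3]) (simp_all add: xs ys c11 eval_nat_numeral Let_def algebra_simps less_Suc_eq)
  next
    case c12
    show ?thesis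
      by (rule dihedral_fin[OF ne p kl', of 4]) (simp_all add: xs ys c12 eval_nat_numeral Let_def algebra_simps less_Suc_eq)
  next
    case c21
    show ?thesis
      by (rule dihedral_fin[OF ne p kl', of 4]) (simp_all add: xs ys c21 eval_nat_numeral Let_def algebra_simps less_Suc_eq)
  next
    case c13
    show ?thesis
      by (rule dihedral_fin[OF ne p kl', of 6]) (simp_all add: xs ys c13 eval_nat_numeral Let_def algebra_simps less_Suc_eq)
  next
    case c31
    show ?thesis
      by (rule dihedral_fin[OF ne p kl', of 6]) (simp_all add: xs ys c31 eval_nat_numeral Let_def algebra_simps less_Suc_eq)
  qed
qed

theorem positivity: "len (wd ws) \<le> len (wd ws \<circ> r i) \<Longrightarrow> pos (wd ws (\<alpha>v i))"
proof (induction "len (wd ws)" arbitrary: ws i rule: less_induct)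
  case less
  define w where "w = wd ws"
  define n where "n = len w"
  obtain q where q: "length q = n" "wd q = w" using len_ex unfolding w_def n_def by blast
  show ?case
  proof (cases "q = []")
    case True
    then have "w = id" using q by simp
    then show ?thesis using pos_av w_def by simp
  next
    case False
    then obtain q' s' where qq: "q = q' @ [s']" by (metis rev_exhaust)
    have wq: "w = wd q' \<circ> r s'" using q qq by (simp add: wd_snoc)
    have wr: "w \<circ> r s' = wd q'" unfolding wq by (simp add: o_assoc[symmetric])
    have lq': "len (wd q') \<le> n - 1" using len_le[of q'] q qq by simp
    have n1: "n \<ge> 1" using q False by (cases q) auto
    have "s' \<noteq> i"
    proof
      assume "s' = i"
      then have "len (w \<circ> r i) \<le> n - 1" using wr lq' by simp
      then show False using less.prems n1 unfolding w_def n_def by simp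
    qed
    define I where "I = {i, s'}"
    define P where "P = (\<lambda>(vs, ps). set ps \<subseteq> I \<and> wd vs \<circ> wd ps = w \<and> len (wd vs) + lenS I (wd ps) \<le> n)"
    have "P (q', [s'])"
    proof -
      have "lenS I (wd [s']) \<le> 1" using lenS_le[of "[s']" I] by (simp add: I_def)
      then show ?thesis unfolding P_def using wq lq' n1 by (simp add: I_def)
    qed
    then obtain z where Pz: "P z" and zmin: "\<And>z'. P z' \<Longrightarrow> len (wd (fst z)) \<le> len (wd (fst z'))"
      using ex_has_least_nat[of P "(q', [s'])" "\<lambda>z. len (wd (fst z))"] by blast
    obtain vs ps where z: "z = (vs, ps)" by (cases z)
    define v where "v = wd vs"
    have Pvp: "set ps \<subseteq> I" "v \<circ> wd ps = w" "len v + lenS I (wd ps) \<le> n"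
      using Pz unfolding z P_def v_def by auto
    obtain p where p: "set p \<subseteq> I" "length p = lenS I (wd ps)" "wd p = wd ps"
      using lenS_ex[OF Pvp(1)] by blast
    have lv: "len v < n"
    proof -
      have "len v \<le> len (wd q')" using zmin[OF \<open>P (q', [s'])\<close>] z v_def by simp
      then show ?thesis using lq' n1 by simp
    qed
    have vr: "len v \<le> len (v \<circ> r j)" if j: "j \<in> I" for j
    proof (rule ccontr)
      assume "\<not> ?thesis"
      then have lt: "len (wd (vs @ [j])) < len v" by (simp add: wd_snoc v_def)
      have "P (vs @ [j], j # p)"
      proof -
        have "set (j # p) \<subseteq> I" using j p by simp
        moreover have "wd (vs @ [j]) \<circ> wd (j # p) = w"
          using Pvp(2) p(3) by (simp add: wd_snoc v_def fun_eq_iff)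
        moreover have "lenS I (wd (j # p)) \<le> length p + 1"
          using lenS_le[of "j # p" I] j p by simp
        ultimately show ?thesis unfolding P_def using lt Pvp(3) p by simp
      qed
      from zmin[OF this] show False using lt z v_def by simp
    qed
    have IH: "pos (v (\<alpha>v j))" if "j \<in> I" for j
      using less.hyps[of vs j] lv vr[OF that] unfolding v_def w_def n_def by simp
    have k2: "length p \<le> lenS I (wd p \<circ> r i)"
    proof (rule ccontr)
      assume "\<not> ?thesis"
      then have lt: "lenS I (wd (p @ [i])) < length p" by (simp add: wd_snoc)
      have "w \<circ> r i = wd vs \<circ> wd (p @ [i])"
        using Pvp(2) p(3) by (simp add: wd_snoc v_def fun_eq_iff)
      moreover have "set (p @ [i]) \<subseteq> I" using p by (simp add: I_def)
      ultimately have "len (w \<circ> r i) \<le> len v + lenS I (wd (p @ [i]))"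
        using subadd[of "p @ [i]" I vs] v_def by simp
      then have "len (w \<circ> r i) < n" using lt Pvp(3) p by simp
      then show False using less.prems unfolding w_def n_def by simp
    qed
    have "\<exists>c d. 0 \<le> c \<and> 0 \<le> d \<and> wd p (\<alpha>v i) = c *\<^sub>R \<alpha>v i + d *\<^sub>R \<alpha>v s'"
      by (rule dihedral) (use \<open>s' \<noteq> i\<close> p k2 in \<open>auto simp: I_def\<close>)
    then obtain c d where cd: "0 \<le> c" "0 \<le> d" "wd p (\<alpha>v i) = c *\<^sub>R \<alpha>v i + d *\<^sub>R \<alpha>v s'"
      by blast
    have "w (\<alpha>v i) = v (wd p (\<alpha>v i))" using Pvp(2) p(3) by (auto simp: fun_eq_iff)
    also have "\<dots> = c *\<^sub>R v (\<alpha>v i) + d *\<^sub>R v (\<alpha>v s')"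
      using cd(3) wd_linear[of vs] unfolding v_def
      by (simp add: real_vector.linear_add real_vector.linear_scale)
    finally have "w (\<alpha>v i) = c *\<^sub>R v (\<alpha>v i) + d *\<^sub>R v (\<alpha>v s')" .
    then show ?thesis using pos_comb[OF IH IH cd(1,2)] unfolding w_def by (simp add: I_def)
  qed
qed


lemma r_av_self: "r i (\<alpha>v i) = - \<alpha>v i"
  by (simp add: r_apply pair a_ii algebra_simps scaleR_2)

theorem faithful:
  assumes fx: "\<And>j. wd ws (\<alpha>v j) = \<alpha>v j"
  shows "wd ws = id"
proof -
  obtain q where q: "length q = len (wd ws)" "wd q = wd ws" using len_ex by blast
  show ?thesis
  proof (cases "q = []")
    case True then show ?thesis using q by simp
  next
    case False
    then obtain q' s where qq: "q = q' @ [s]" by (metis rev_exhaust)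
    have "len (wd q' \<circ> r s) = length q" using q qq by (simp add: wd_snoc)
    moreover have "len (wd q') \<le> length q'" by (rule len_le)
    ultimately have "len (wd q') \<le> len (wd q' \<circ> r s)" using qq by simp
    from positivity[OF this] obtain c where c: "\<forall>k. 0 \<le> c k"
      "wd q' (\<alpha>v s) = (\<Sum>k\<in>UNIV. c k *\<^sub>R \<alpha>v k)" unfolding pos_def by blast
    have "\<alpha>v s = wd q (\<alpha>v s)" using fx q by simp
    also have "\<dots> = wd q' (- \<alpha>v s)" using qq by (simp add: wd_snoc r_av_self)
    also have "\<dots> = - wd q' (\<alpha>v s)" using wd_linear[of q'] by (simp add: real_vector.linear_neg)
    finally have e: "\<alpha>v s + (\<Sum>k\<in>UNIV. c k *\<^sub>R \<alpha>v k) = 0" using c by simp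
    define c' where "c' = (\<lambda>k. c k + (if k = s then 1 else 0))"
    have "(\<Sum>k\<in>UNIV. c' k *\<^sub>R \<alpha>v k) = (\<Sum>k\<in>UNIV. c k *\<^sub>R \<alpha>v k) + (\<Sum>k\<in>UNIV. (if k = s then 1 else 0) *\<^sub>R \<alpha>v k)"
      unfolding c'_def by (simp add: scaleR_add_left sum.distrib)
    also have "(\<lambda>k. (if k = s then 1 else 0) *\<^sub>R \<alpha>v k) = (\<lambda>k. if k = s then \<alpha>v s else 0)" by auto
    hence "(\<Sum>k\<in>UNIV. (if k = s then 1 else 0) *\<^sub>R \<alpha>v k) = \<alpha>v s" by (simp only:) (simp add: sum.delta)
    finally have "(\<Sum>k\<in>UNIV. c' k *\<^sub>R \<alpha>v k) = 0" using e by (simp add: add.commute)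
    then have "c' s = 0" using indep unfolding lin_indep_vecs_def by blast
    then show ?thesis using c(1) unfolding c'_def by (smt (verit))
  qed
qed

end

theorem mainTheorem12:
  fixes a :: "'i::finite \<Rightarrow> 'i \<Rightarrow> int"
    and \<alpha> :: "'i \<Rightarrow> 'v::euclidean_space \<Rightarrow> real"
    and \<alpha>v :: "'i \<Rightarrow> 'v"
    and K :: "'i set"
    and u :: 'v
  assumes "gcm a"
    and "\<And>i. linear (\<alpha> i)"
    and "lin_indep_forms \<alpha>"
    and "lin_indep_vecs \<alpha>v"
    and "\<And>i j. \<alpha> j (\<alpha>v i) = of_int (a i j)"
    and "indecomposable a"
    and "K \<subset> UNIV"
    and "infinite (Wgen \<alpha> \<alpha>v K)"
    and "\<And>i. i \<in> K \<Longrightarrow> \<alpha> i u = 0"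
    and "\<And>i. i \<notin> K \<Longrightarrow> \<alpha> i u > 0"
  shows "\<exists>w \<in> Wgen \<alpha> \<alpha>v UNIV. infinite {w' (w u) | w'. w' \<in> Wgen \<alpha> \<alpha>v K}"
proof (rule ccontr)
  assume contra: "\<not> ?thesis"
  interpret KM a \<alpha> \<alpha>v using assms(1,2,4,5) by (simp add: KM_def)
  define Orb where "Orb x = {wd ws x | ws. set ws \<subseteq> K}" for x
  have fin: "finite (Orb (wd ws u))" for ws
  proof -
    have "wd ws \<in> Wgen \<alpha> \<alpha>v UNIV" by (auto simp: Wgen_eq)
    with contra have "finite {w' (wd ws u) | w'. w' \<in> Wgen \<alpha> \<alpha>v K}" by blast
    moreover have "{w' (wd ws u) | w'. w' \<in> Wgen \<alpha> \<alpha>v K} = Orb (wd ws u)"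
      unfolding Orb_def Wgen_eq by blast
    ultimately show ?thesis by simp
  qed
  define T where "T = range (\<lambda>ws. wd ws u)"
  have rT: "r j x \<in> span T" if "x \<in> span T" for j x
  proof -
    have "r j ` T \<subseteq> T" unfolding T_def by (auto intro!: image_eqI[of _ _ "j # _"])
    then have "span (r j ` T) \<subseteq> span T" by (rule span_mono)
    moreover have "r j x \<in> span (r j ` T)"
      using that by (metis image_eqI r_linear span_linear_image)
    ultimately show ?thesis by blast
  qed
  obtain i0 where i0: "i0 \<notin> K" using assms(7) by blast
  have "\<alpha>v i0 \<in> span T"
  proof -
    have "u \<in> T" unfolding T_def by (rule range_eqI[of _ _ "[]"]) simp
    moreover have "r i0 u \<in> T" unfolding T_def by (rule range_eqI[of _ _ "[i0]"]) simp
    ultimately have "(1 / \<alpha> i0 u) *\<^sub>R (u - r i0 u) \<in> span T" by (intro span_mul span_diff span_base)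
    moreover have "(1 / \<alpha> i0 u) *\<^sub>R (u - r i0 u) = \<alpha>v i0"
      using assms(10)[OF i0] by (simp add: r_apply)
    ultimately show ?thesis by simp
  qed
  have allspan: "\<alpha>v j \<in> span T" for j
  proof -
    have "(i0, j) \<in> {(k, l). a k l \<noteq> 0}\<^sup>*" using assms(6) unfolding indecomposable_def by blast
    then show ?thesis
    proof (induction rule: rtrancl_induct)
      case base then show ?case by fact
    next
      case (step k l)
      then have akl: "a k l \<noteq> 0" by simp
      have h1: "\<alpha>v k \<in> span T" by (rule step.IH)
      have h2: "r l (\<alpha>v k) \<in> span T" by (rule rT[OF h1])
      have "(1 / of_int (a k l)) *\<^sub>R (\<alpha>v k - r l (\<alpha>v k)) \<in> span T"
        by (rule span_mul[OF span_diff[OF h1 h2]])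
      moreover have "(1 / of_int (a k l)) *\<^sub>R (\<alpha>v k - r l (\<alpha>v k)) = \<alpha>v l"
        using akl by (simp add: r_apply pair del: of_int_eq_0_iff)
      ultimately show ?case by simp
    qed
  qed
  have finspan: "finite (Orb x)" if "x \<in> span T" for x
  proof -
    from that have "\<exists>S c. finite S \<and> S \<subseteq> T \<and> (\<Sum>y\<in>S. c y *\<^sub>R y) = x"
      by (simp add: span_explicit) metis
    then obtain S c where S: "finite S" "S \<subseteq> T" "x = (\<Sum>y\<in>S. c y *\<^sub>R y)"
      by metis
    define F where "F = (\<lambda>g::'v \<Rightarrow> 'v. \<Sum>y\<in>S. c y *\<^sub>R g y)"
    have sub: "Orb x \<subseteq> F ` (PiE S Orb)"
    proof
      fix z assume "z \<in> Orb x"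
      then obtain ws where ws: "set ws \<subseteq> K" "z = wd ws x" unfolding Orb_def by blast
      have "z = (\<Sum>y\<in>S. c y *\<^sub>R wd ws y)"
        unfolding ws(2) S(3) using wd_linear[of ws]
        by (simp add: real_vector.linear_sum real_vector.linear_scale)
      also have "\<dots> = F (\<lambda>y\<in>S. wd ws y)" unfolding F_def by (rule sum.cong) auto
      finally have zF: "z = F (\<lambda>y\<in>S. wd ws y)" .
      have mem: "(\<lambda>y\<in>S. wd ws y) \<in> PiE S Orb"
        unfolding restrict_PiE_iff Orb_def using ws(1) by blast
      show "z \<in> F ` (PiE S Orb)" unfolding zF by (rule imageI[OF mem])
    qed
    have "finite (PiE S Orb)"
    proof (rule finite_PiE[OF S(1)])
      fix y assume "y \<in> S"
      then obtain ws where "y = wd ws u" using S(2) unfolding T_def by blast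
      then show "finite (Orb y)" using fin[of ws] by simp
    qed
    then have "finite (F ` (PiE S Orb))" by (rule finite_imageI)
    then show ?thesis using sub by (rule finite_subset[rotated])
  qed
  define \<Phi> where "\<Phi> f = (\<lambda>j. f (\<alpha>v j))" for f :: "'v \<Rightarrow> 'v"
  have "\<Phi> ` Wgen \<alpha> \<alpha>v K \<subseteq> PiE UNIV (\<lambda>j. Orb (\<alpha>v j))"
    unfolding Wgen_eq Orb_def \<Phi>_def by auto
  moreover have "finite (PiE UNIV (\<lambda>j. Orb (\<alpha>v j)))"
    by (rule finite_PiE) (auto intro: finspan allspan)
  ultimately have "finite (\<Phi> ` Wgen \<alpha> \<alpha>v K)" by (rule finite_subset)
  moreover have "inj_on \<Phi> (Wgen \<alpha> \<alpha>v K)"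
  proof (rule inj_onI)
    fix f g assume "f \<in> Wgen \<alpha> \<alpha>v K" "g \<in> Wgen \<alpha> \<alpha>v K" and e: "\<Phi> f = \<Phi> g"
    then obtain p1 p2 where p: "f = wd p1" "g = wd p2" unfolding Wgen_eq by blast
    have "wd (rev p2 @ p1) (\<alpha>v j) = \<alpha>v j" for j
      using fun_cong[OF e, of j] p by (simp add: \<Phi>_def wd_append wd_rev_inv)
    then have "wd (rev p2 @ p1) = id" by (rule faithful)
    then have "wd p1 x = wd p2 x" for x
      using wd_inv_rev[of p2 "wd p1 x"] by (simp add: wd_append fun_eq_iff)
    then show "f = g" using p by auto
  qed
  ultimately have "finite (Wgen \<alpha> \<alpha>v K)" by (rule finite_imageD)
  then show False using assms(8) by simp
qed

end
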